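(* Let $(\tau,\{\mathbf R_s\}_{s\in\mathcal S})$ be a feasible TWAVRP solution. Then for every ordered pair of distinct customers $(i,j)\in V_C\times V_C$ and every $(d_1,d_2)\in\mathbb R^2$ with $d_1+d_2>w_i+w_j$, at least one of the following holds: (a) for every $s\in\mathcal S$, $\mathbf R_s$ contains no $i$–$j$ path whose travel time under $\theta_s$ is $\ge d_1$; (b) for every $s\in\mathcal S$, $\mathbf R_s$ contains no $j$–$i$ path whose travel time under $\theta_s$ is $\ge d_2$.
   Context: Let $G=(V,A)$ be a directed graph with $V=\{0,1,\dots,n\}$; node $0$ is the depot and $V_C=V\setminus\{0\}$ is the set of customers. The depot has operating window $[e_0,\ell_0]$, vehicles have capacity $Q$, and each customer $i\in V_C$ has an exogenous time window $[e_i,\ell_i]$. A vector of operational parameters $\theta$ consists of arc costs $c_{ij}\ge 0$ and arc travel times $t_{ij}\ge0$ for $(i,j)\in A$, and demands $q_i\ge 0$ and service times $u_i\ge 0$ for $i\in V_C$. The customer set is partitioned as $V_C=V_{\mathrm{cont}}\cup V_{\mathrm{disc}}$ (disjoint). For $i\in V_{\mathrm{cont}}$ a width $w_i\ge0$ with $e_i\le \ell_i-w_i$ is given and $TW_i=\{[y,y+w_i]: e_i\le y\le \ell_i-w_i\}$. For $i\in V_{\mathrm{disc}}$, $TW_i=\{[\underline y_{i1},\bar y_{i1}],\dots,[\underline y_{iN_i},\bar y_{iN_i}]\}$ is a finite set of intervals with $\underline y_{ib}\le\bar y_{ib}$, none contained in another, ordered so that $e_i=\underline y_{i1}<\dots<\underline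 y_{iN_i}$ and $\bar y_{i1}<\dots<\bar y_{iN_i}=\ell_i$; for such $i$ define $w_i=\max_{b}(\bar y_{ib}-\underline y_{ib})$. A route set $\mathbf R=(R_1,\dots,R_m)$ is a collection of pairwise disjoint nonempty sequences $R_k=(R_{k,1},\dots,R_{k,n_k})$ of distinct customers (every customer with positive demand appearing in exactly one sequence). For a vector $\tau=(\tau_1,\dots,\tau_n)$ of closed intervals, $\mathcal X(\mathbf R,\tau;\theta)$ is the set of $\bm a\in\mathbb R^n_{\ge0}$ with: $a_{R_{k,1}}\ge e_0+t_{0,R_{k,1}}$ for all $k$; $a_{R_{k,l+1}}-a_{R_{k,l}}\ge t_{R_{k,l},R_{k,l+1}}+u_{R_{k,l}}$ for all $k$ and $1\le l\le n_k-1$; $a_{R_{k,n_k}}\le \ell_0-t_{R_{k,n_k},0}-u_{R_{k,n_k}}$ for all $k$; and $a_i\in\tau_i$ for all $i\in V_C$. We write $\mathbf R\in\mathcal R(\tau;\theta)$ if $\sum_{i\in R_k}q_i\le Q$ for every $k$ and $\mathcal X(\mathbf R,\tau;\theta)\neq\emptyset$. Finitely many scenarios $\theta_1,\dots,\theta_S$ are given, $\mathcal S=\{1,\dots,S\}$. A feasible TWAVRP solution is a pair $(\tau,\{\mathbf R_s\}_{s\in\mathcal S})$ with $\tau_i\in TW_i$ for all $i\in V_C$ and $\mathbf R_s\in\mathcal R(\tau;\theta_s)$ for all $s$. A route set $\mathbf R$ contains an $i$–$j$ path $\pi=(v_1,\dots,v_p)$ ($p\ge2$, $v_1=i$, $v_p=j$)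 if $\pi$ is a contiguous subsequence of some route $R_k$, i.e. $v_r=R_{k,l+r-1}$ for $r=1,\dots,p$ and some $k,l$. Its travel time under $\theta$ is $t(\pi)=\sum_{r=1}^{p-1}(t_{v_rv_{r+1}}+u_{v_r})$. *)

theory Defs
  imports Complex_Main
begin

text \<open>Operational parameters theta: arc costs, arc travel times, demands, service times.
  Nodes are natural numbers; node 0 is the depot, customers are 1..n.\<close>
record params =
  cst :: "nat \<Rightarrow> nat \<Rightarrow> real"
  tt  :: "nat \<Rightarrow> nat \<Rightarrow> real"
  dem :: "nat \<Rightarrow> real"
  svc :: "nat \<Rightarrow> real"

text \<open>Instance data: number of customers, exogenous windows (index 0 = depot window),
  capacity, partition into continuous / discrete customers, widths for continuous
  customers, and the finite interval lists (indexed 1..N_i) for discrete customers.\<close>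
record twinst =
  ncust :: nat
  ew    :: "nat \<Rightarrow> real"
  lw    :: "nat \<Rightarrow> real"
  cap   :: real
  Vcont :: "nat set"
  Vdisc :: "nat set"
  wcont :: "nat \<Rightarrow> real"
  nb    :: "nat \<Rightarrow> nat"
  ylo   :: "nat \<Rightarrow> nat \<Rightarrow> real"
  yhi   :: "nat \<Rightarrow> nat \<Rightarrow> real"

definition customers :: "twinst \<Rightarrow> nat set" where
  "customers I = {1..ncust I}"

definition width :: "twinst \<Rightarrow> nat \<Rightarrow> real" where
  "width I i = (if i \<in> Vcont I then wcont I i
                else Max ((\<lambda>b. yhi I i b - ylo I i b) ` {1..nb I i}))"

definition valid_instance :: "twinst \<Rightarrow> (nat \<Rightarrow> params) \<Rightarrow> nat \<Rightarrow> bool" where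
  "valid_instance I \<theta>s S \<longleftrightarrow>
     Vcont I \<union> Vdisc I = customers I \<and> Vcont I \<inter> Vdisc I = {} \<and>
     (\<forall>i\<in>Vcont I. wcont I i \<ge> 0 \<and> ew I i \<le> lw I i - wcont I i) \<and>
     (\<forall>i\<in>Vdisc I. nb I i \<ge> 1 \<and>
        (\<forall>b\<in>{1..nb I i}. ylo I i b \<le> yhi I i b) \<and>
        (\<forall>b\<in>{1..nb I i}. \<forall>b'\<in>{1..nb I i}. b \<noteq> b' \<longrightarrow>
             \<not> (ylo I i b' \<le> ylo I i b \<and> yhi I i b \<le> yhi I i b')) \<and>
        (\<forall>b\<in>{1..nb I i}. \<forall>b'\<in>{1..nb I i}. b < b' \<longrightarrow>
             ylo I i b < ylo I i b' \<and> yhi I i b < yhi I i b') \<and>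
        ylo I i 1 = ew I i \<and> yhi I i (nb I i) = lw I i) \<and>
     (\<forall>s\<in>{1..S}.
        (\<forall>i\<in>{0..ncust I}. \<forall>j\<in>{0..ncust I}. cst (\<theta>s s) i j \<ge> 0 \<and> tt (\<theta>s s) i j \<ge> 0) \<and>
        (\<forall>i\<in>customers I. dem (\<theta>s s) i \<ge> 0 \<and> svc (\<theta>s s) i \<ge> 0))"

text \<open>Closed intervals are represented as pairs (lower, upper).\<close>
definition in_TW :: "twinst \<Rightarrow> nat \<Rightarrow> real \<times> real \<Rightarrow> bool" where
  "in_TW I i iv \<longleftrightarrow>
     (if i \<in> Vcont I
      then (\<exists>y. ew I i \<le> y \<and> y \<le> lw I i - wcont I i \<and> iv = (y, y + wcont I i))
      else (\<exists>b\<in>{1..nb I i}. iv = (ylo I i b, yhi I i b)))"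

text \<open>A route set: pairwise disjoint nonempty sequences of distinct customers, every
  customer with positive demand appearing (in exactly one sequence, by disjointness).\<close>
definition route_set :: "twinst \<Rightarrow> params \<Rightarrow> nat list list \<Rightarrow> bool" where
  "route_set I \<theta> R \<longleftrightarrow>
     (\<forall>r\<in>set R. r \<noteq> [] \<and> distinct r \<and> set r \<subseteq> customers I) \<and>
     (\<forall>k<length R. \<forall>k'<length R. k \<noteq> k' \<longrightarrow> set (R ! k) \<inter> set (R ! k') = {}) \<and>
     (\<forall>i\<in>customers I. dem \<theta> i > 0 \<longrightarrow> (\<exists>r\<in>set R. i \<in> set r))"

definition sched_feasible ::
  "twinst \<Rightarrow> params \<Rightarrow> nat list list \<Rightarrow> (nat \<Rightarrow> real \<times> real) \<Rightarrow> (nat \<Rightarrow> real) \<Rightarrow> bool" where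
  "sched_feasible I \<theta> R \<tau> a \<longleftrightarrow>
     (\<forall>i\<in>customers I. a i \<ge> 0 \<and> fst (\<tau> i) \<le> a i \<and> a i \<le> snd (\<tau> i)) \<and>
     (\<forall>r\<in>set R.
        a (hd r) \<ge> ew I 0 + tt \<theta> 0 (hd r) \<and>
        (\<forall>l. Suc l < length r \<longrightarrow>
             a (r ! Suc l) - a (r ! l) \<ge> tt \<theta> (r ! l) (r ! Suc l) + svc \<theta> (r ! l)) \<and>
        a (last r) \<le> lw I 0 - tt \<theta> (last r) 0 - svc \<theta> (last r))"

definition in_RR :: "twinst \<Rightarrow> params \<Rightarrow> (nat \<Rightarrow> real \<times> real) \<Rightarrow> nat list list \<Rightarrow> bool" where
  "in_RR I \<theta> \<tau> R \<longleftrightarrow>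
     route_set I \<theta> R \<and>
     (\<forall>r\<in>set R. sum_list (map (dem \<theta>) r) \<le> cap I) \<and>
     (\<exists>a. sched_feasible I \<theta> R \<tau> a)"

definition feasible_solution ::
  "twinst \<Rightarrow> (nat \<Rightarrow> params) \<Rightarrow> nat \<Rightarrow> (nat \<Rightarrow> real \<times> real) \<Rightarrow> (nat \<Rightarrow> nat list list) \<Rightarrow> bool" where
  "feasible_solution I \<theta>s S \<tau> Rs \<longleftrightarrow>
     (\<forall>i\<in>customers I. in_TW I i (\<tau> i)) \<and>
     (\<forall>s\<in>{1..S}. in_RR I (\<theta>s s) \<tau> (Rs s))"

definition contains_path :: "nat list list \<Rightarrow> nat list \<Rightarrow> bool" where
  "contains_path R \<pi> \<longleftrightarrow> length \<pi> \<ge> 2 \<and> (\<exists>r\<in>set R. \<exists>xs ys. r = xs @ \<pi> @ ys)"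

definition path_time :: "params \<Rightarrow> nat list \<Rightarrow> real" where
  "path_time \<theta> \<pi> = (\<Sum>r<length \<pi> - 1. tt \<theta> (\<pi> ! r) (\<pi> ! Suc r) + svc \<theta> (\<pi> ! r))"

end

theory Submission
  imports Defs
begin

lemma chain_le:
  assumes step: "\<forall>l. Suc l < length r \<longrightarrow>
             a (r ! Suc l) - a (r ! l) \<ge> tt \<theta> (r ! l) (r ! Suc l) + svc \<theta> (r ! l)"
  shows "p + k < length r \<Longrightarrow>
     a (r ! (p+k)) - a (r ! p) \<ge> (\<Sum>q<k. tt \<theta> (r ! (p+q)) (r ! Suc (p+q)) + svc \<theta> (r ! (p+q)))"
proof (induction k)
  case 0 then show ?case by simp
next
  case (Suc k)
  then have ih: "a (r ! (p+k)) - a (r ! p) \<ge> (\<Sum>q<k. tt \<theta> (r ! (p+q)) (r ! Suc (p+q)) + svc \<theta> (r ! (p+q)))" by simp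
  have "a (r ! Suc (p+k)) - a (r ! (p+k)) \<ge> tt \<theta> (r ! (p+k)) (r ! Suc (p+k)) + svc \<theta> (r ! (p+k))"
    using step Suc.prems by simp
  with ih show ?case by simp
qed

lemma path_bound:
  assumes "sched_feasible I \<theta> R \<tau> a" and "contains_path R \<pi>"
  shows "a (last \<pi>) - a (hd \<pi>) \<ge> path_time \<theta> \<pi>"
proof -
  from assms(2) obtain r xs ys where r: "r \<in> set R" "r = xs @ \<pi> @ ys" and len: "length \<pi> \<ge> 2"
    unfolding contains_path_def by blast
  from assms(1) r have step: "\<forall>l. Suc l < length r \<longrightarrow>
             a (r ! Suc l) - a (r ! l) \<ge> tt \<theta> (r ! l) (r ! Suc l) + svc \<theta> (r ! l)"
    unfolding sched_feasible_def by blast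
  define p where "p = length xs"
  define k where "k = length \<pi> - 1"
  have pk: "p + k < length r" using r len by (simp add: p_def k_def)
  have idx: "\<And>q. q < length \<pi> \<Longrightarrow> r ! (p + q) = \<pi> ! q"
    using r by (simp add: p_def nth_append)
  have "a (r ! (p+k)) - a (r ! p) \<ge> (\<Sum>q<k. tt \<theta> (r ! (p+q)) (r ! Suc (p+q)) + svc \<theta> (r ! (p+q)))"
    using chain_le[OF step pk] .
  moreover have "(\<Sum>q<k. tt \<theta> (r ! (p+q)) (r ! Suc (p+q)) + svc \<theta> (r ! (p+q))) = path_time \<theta> \<pi>"
    unfolding path_time_def k_def
  proof (rule sum.cong)
    fix q assume "q \<in> {..<length \<pi> - 1}"
    then have "q < length \<pi>" "Suc q < length \<pi>" by auto
    then show "tt \<theta> (r ! (p+q)) (r ! Suc (p+q)) + svc \<theta> (r ! (p+q)) =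
               tt \<theta> (\<pi> ! q) (\<pi> ! Suc q) + svc \<theta> (\<pi> ! q)"
      using idx[of q] idx[of "Suc q"] by simp
  qed simp
  moreover have "r ! (p+k) = last \<pi>" proof -
    have "\<pi> \<noteq> []" using len by auto
    then have "last \<pi> = \<pi> ! k" by (simp add: k_def last_conv_nth)
    moreover have "k < length \<pi>" using len by (simp add: k_def)
    ultimately show ?thesis using idx[of k] by simp
  qed
  moreover have "r ! p = hd \<pi>" proof -
    have "\<pi> \<noteq> []" using len by auto
    then show ?thesis using idx[of 0] by (simp add: hd_conv_nth)
  qed
  ultimately show ?thesis by simp
qed

lemma width_bound:
  assumes "in_TW I i iv"
  shows "snd iv - fst iv \<le> width I i"
proof (cases "i \<in> Vcont I")
  case True then show ?thesis using assms by (auto simp: in_TW_def width_def)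
next
  case False
  then obtain b where b: "b \<in> {1..nb I i}" "iv = (ylo I i b, yhi I i b)"
    using assms by (auto simp: in_TW_def)
  have "yhi I i b - ylo I i b \<le> Max ((\<lambda>b. yhi I i b - ylo I i b) ` {1..nb I i})"
    using b by (intro Max_ge) auto
  then show ?thesis using False b by (simp add: width_def)
qed

theorem mainTheorem4:
  fixes I :: twinst and \<theta>s :: "nat \<Rightarrow> params" and S :: nat
    and \<tau> :: "nat \<Rightarrow> real \<times> real" and Rs :: "nat \<Rightarrow> nat list list"
    and i j :: nat and d1 d2 :: real
  assumes "valid_instance I \<theta>s S"
    and "feasible_solution I \<theta>s S \<tau> Rs"
    and "i \<in> customers I" and "j \<in> customers I" and "i \<noteq> j"
    and "d1 + d2 > width I i + width I j"
  shows "(\<forall>s\<in>{1..S}. \<not> (\<exists>\<pi>. contains_path (Rs s) \<pi> \<and> hd \<pi> = i \<and> last \<pi> = j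
                                  \<and> path_time (\<theta>s s) \<pi> \<ge> d1))
       \<or> (\<forall>s\<in>{1..S}. \<not> (\<exists>\<pi>. contains_path (Rs s) \<pi> \<and> hd \<pi> = j \<and> last \<pi> = i
                                  \<and> path_time (\<theta>s s) \<pi> \<ge> d2))"
proof (rule ccontr)
  assume "\<not> ?thesis"
  then obtain s \<pi> s' \<pi>' where s: "s \<in> {1..S}" "contains_path (Rs s) \<pi>" "hd \<pi> = i" "last \<pi> = j"
      "path_time (\<theta>s s) \<pi> \<ge> d1"
    and s': "s' \<in> {1..S}" "contains_path (Rs s') \<pi>'" "hd \<pi>' = j" "last \<pi>' = i"
      "path_time (\<theta>s s') \<pi>' \<ge> d2" by blast
  from assms(2) s(1) obtain a where a: "sched_feasible I (\<theta>s s) (Rs s) \<tau> a"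
    unfolding feasible_solution_def in_RR_def by blast
  from assms(2) s'(1) obtain a' where a': "sched_feasible I (\<theta>s s') (Rs s') \<tau> a'"
    unfolding feasible_solution_def in_RR_def by blast
  have tw: "in_TW I i (\<tau> i)" "in_TW I j (\<tau> j)" using assms(2-4) by (auto simp: feasible_solution_def)
  have 1: "a j - a i \<ge> d1" using path_bound[OF a s(2)] s by simp
  have 2: "a' i - a' j \<ge> d2" using path_bound[OF a' s'(2)] s' by simp
  have ai: "fst (\<tau> i) \<le> a i" "a i \<le> snd (\<tau> i)" "fst (\<tau> j) \<le> a j" "a j \<le> snd (\<tau> j)"
    using a assms(3,4) unfolding sched_feasible_def by auto
  have ai': "fst (\<tau> i) \<le> a' i" "a' i \<le> snd (\<tau> i)" "fst (\<tau> j) \<le> a' j" "a' j \<le> snd (\<tau> j)"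
    using a' assms(3,4) unfolding sched_feasible_def by auto
  have "snd (\<tau> i) - fst (\<tau> i) \<le> width I i" "snd (\<tau> j) - fst (\<tau> j) \<le> width I j"
    using width_bound tw by auto
  with 1 2 ai ai' assms(6) show False by linarith
qed

end
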